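(* Consider three qubits $A,B,C$, each with Hilbert space $\mathbb{C}^2$ and computational basis $\{|0\rangle,|1\rangle\}$. Define the unit vectors \[ |\psi_{AB}\rangle=\tfrac{1}{\sqrt{217}}\big(6|01\rangle-9|10\rangle-10|11\rangle\big)\in\mathbb{C}^2_A\otimes\mathbb{C}^2_B, \] \[ |\psi_{AC}\rangle=\tfrac{1}{\sqrt{46}}\big(-2|00\rangle-4|01\rangle-|10\rangle+5|11\rangle\big)\in\mathbb{C}^2_A\otimes\mathbb{C}^2_C, \] \[ |\psi_{BC}\rangle=\tfrac{1}{\sqrt{53}}\big(-6|00\rangle-|01\rangle-4|10\rangle\big)\in\mathbb{C}^2_B\otimes\mathbb{C}^2_C, \] and the operators on $\mathbb{C}^2_A\otimes\mathbb{C}^2_B\otimes\mathbb{C}^2_C$ \[ H=\tfrac16\Big(|\psi_{AB}\rangle\langle\psi_{AB}|\otimes I_C+|\psi_{AC}\rangle\langle\psi_{AC}|\otimes I_B+I_A\otimes|\psi_{BC}\rangle\langle\psi_{BC}|\Big), \] \[ H_{\mathrm{target}}=\tfrac16\Big(|0\rangle\langle0|_A\otimes|0\rangle\langle0|_B\otimes I_C+|0\rangle\langle0|_A\otimes I_B\otimes|0\rangle\langle0|_C+I_A\otimes|0\rangle\langle0|_B\otimes|0\rangle\langle0|_C\Big). \] Then the sum of the three largest eigenvalues of $H$ strictly exceeds $5/6$, which is the sum of the three largest eigenvalues of $H_{\mathrm{target}}$. Consequently $H\preceq H_{\mathrm{target}}$ fails; i.e., with $Q=I/2$ on $\mathbb{C}^2$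 (for which $|0\rangle$ is a maximal eigenvector), $n=3$, and $\mu$ the uniform probability measure on the 2-element subsets of $\{A,B,C\}$, there exist pure states $(|\psi_I\rangle)_I$ such that $\sum_I \mu_I |\psi_I\rangle\langle\psi_I|\otimes Q^{\otimes I^c}\not\preceq \sum_I\mu_I |q_1\rangle\langle q_1|^{\otimes I}\otimes Q^{\otimes I^c}$ (with $|q_1\rangle=|0\rangle$).
   Context: Operators such as $|\psi_{AC}\rangle\langle\psi_{AC}|\otimes I_B$ denote the operator acting as $|\psi_{AC}\rangle\langle\psi_{AC}|$ on qubits $A,C$ and as the identity on qubit $B$ (embedded in the ordering $A\otimes B\otimes C$); similarly for the other terms. For Hermitian matrices $X,Y$ of the same size, $X\preceq Y$ (majorization) means that, with eigenvalues listed in nonincreasing order, $\sum_{i=1}^k\lambda_i(X)\le\sum_{i=1}^k\lambda_i(Y)$ for every $k$, with equality when $k$ equals the dimension (equal traces). For $I\subseteq\{A,B,C\}$, $I^c$ is its complement and $Q^{\otimes I^c}$ is $Q$ tensored on the qubits in $I^c$. *)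

theory Defs
  imports "Jordan_Normal_Form.Char_Poly" "HOL-Library.Multiset"
begin

(* Three qubits A,B,C indexed 0,1,2; basis index of |a b c> is 4a+2b+c. *)
definition qbit :: "nat \<Rightarrow> nat \<Rightarrow> nat" where
  "qbit i k = (i div 2 ^ (2 - k)) mod 2"

(* embed a two-qubit operator M (basis index 2x+y for |x>_p |y>_q, p<q) acting on
   qubits p,q, tensored with the identity on the remaining qubit r *)
definition embed2 :: "nat \<Rightarrow> nat \<Rightarrow> nat \<Rightarrow> complex mat \<Rightarrow> complex mat" where
  "embed2 p q r M = mat 8 8 (\<lambda>(i,j).
     if qbit i r = qbit j r then M $$ (2 * qbit i p + qbit i q, 2 * qbit j p + qbit j q) else 0)"

definition ketbra :: "complex vec \<Rightarrow> complex mat" where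
  "ketbra v = mat (dim_vec v) (dim_vec v) (\<lambda>(i,j). v $ i * cnj (v $ j))"

definition hermitian :: "complex mat \<Rightarrow> bool" where
  "hermitian X \<longleftrightarrow> X \<in> carrier_mat (dim_row X) (dim_row X) \<and>
     (\<forall>i < dim_row X. \<forall>j < dim_row X. X $$ (i,j) = cnj (X $$ (j,i)))"

definition eigs_desc :: "complex mat \<Rightarrow> real list" where
  "eigs_desc X = rev (sorted_list_of_multiset (image_mset Re (proots (char_poly X))))"

definition top_eig_sum :: "nat \<Rightarrow> complex mat \<Rightarrow> real" where
  "top_eig_sum k X = sum_list (take k (eigs_desc X))"

definition majorized :: "complex mat \<Rightarrow> complex mat \<Rightarrow> bool" where
  "majorized X Y \<longleftrightarrow> (\<forall>k \<le> dim_row X. top_eig_sum k X \<le> top_eig_sum k Y) \<and>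
     top_eig_sum (dim_row X) X = top_eig_sum (dim_row X) Y"

definition psiAB :: "complex vec" where
  "psiAB = vec_of_list (map (\<lambda>x. complex_of_real (x / sqrt 217)) [0, 6, -9, -10])"
definition psiAC :: "complex vec" where
  "psiAC = vec_of_list (map (\<lambda>x. complex_of_real (x / sqrt 46)) [-2, -4, -1, 5])"
definition psiBC :: "complex vec" where
  "psiBC = vec_of_list (map (\<lambda>x. complex_of_real (x / sqrt 53)) [-6, -1, -4, 0])"

definition ket00 :: "complex vec" where
  "ket00 = vec_of_list [1, 0, 0, 0]"

definition Hmat :: "complex mat" where
  "Hmat = (1/6 :: complex) \<cdot>\<^sub>m (embed2 0 1 2 (ketbra psiAB) + embed2 0 2 1 (ketbra psiAC)
                                 + embed2 1 2 0 (ketbra psiBC))"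

definition Htarget :: "complex mat" where
  "Htarget = (1/6 :: complex) \<cdot>\<^sub>m (embed2 0 1 2 (ketbra ket00) + embed2 0 2 1 (ketbra ket00)
                                 + embed2 1 2 0 (ketbra ket00))"

end

theory Submission
  imports Defs
begin

definition m8 :: "'a list list \<Rightarrow> 'a mat" where "m8 xs = mat 8 8 (\<lambda>(i,j). xs!i!j)"

lemma m8_carrier[simp]: "m8 xs \<in> carrier_mat 8 8" "dim_row (m8 xs) = 8" "dim_col (m8 xs) = 8"
  by (auto simp: m8_def)

lemma less8: "i < (8::nat) \<longleftrightarrow> i = 0 \<or> i = 1 \<or> i = 2 \<or> i = 3 \<or> i = 4 \<or> i = 5 \<or> i = 6 \<or> i = 7"
  by auto

lemma all8: "(\<forall>i<(8::nat). P i) = (P 0 \<and> P 1 \<and> P 2 \<and> P 3 \<and> P 4 \<and> P 5 \<and> P 6 \<and> P 7)"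
  unfolding less8 by blast

lemma sum8: "(\<Sum>k\<in>{0..<8::nat}. f k) = f 0 + f 1 + f 2 + f 3 + f 4 + f 5 + f 6 + f 7"
  by (simp add: eval_nat_numeral)

lemma mat8_eqI: "A \<in> carrier_mat 8 8 \<Longrightarrow> B \<in> carrier_mat 8 8 \<Longrightarrow>
   (\<forall>i<8. \<forall>j<8. A$$(i,j) = B$$(i,j)) \<Longrightarrow> A = B"
  by (rule eq_matI) auto

lemma diag8: "diag_mat (m8 xs) = [xs!0!0, xs!1!1, xs!2!2, xs!3!3, xs!4!4, xs!5!5, xs!6!6, xs!7!7]"
  by (simp add: diag_mat_def m8_def eval_nat_numeral upt_Suc)

lemma ut8I: "(\<forall>i<8. \<forall>j<8. j < i \<longrightarrow> m8 xs $$ (i,j) = 0) \<Longrightarrow> upper_triangular (m8 xs)"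
  unfolding upper_triangular_def by auto

lemma lt8I: "(\<forall>i<8. \<forall>j<8. i < j \<longrightarrow> m8 xs $$ (i,j) = 0) \<Longrightarrow> i < j \<Longrightarrow> j < 8 \<Longrightarrow> m8 xs $$ (i,j) = 0"
  by auto

lemma det_cert:
  assumes M: "M \<in> carrier_mat n n" and U: "U \<in> carrier_mat n n" and L: "L \<in> carrier_mat n n"
    and ut: "upper_triangular U" and lt: "\<And>i j. i < j \<Longrightarrow> j < n \<Longrightarrow> L $$ (i,j) = 0"
    and eq: "M * U = L"
  shows "det M * prod_list (diag_mat U) = prod_list (diag_mat L)"
  using det_mult[OF M U] det_upper_triangular[OF ut U] det_lower_triangular[OF lt L] eq by simp

lemma ketbra_entry:
  assumes "n > 0" "length l = 4" "a < 4" "b < 4"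
  shows "ketbra (vec_of_list (map (\<lambda>x. complex_of_real (x / sqrt n)) l)) $$ (a,b)
     = complex_of_real (l!a * l!b / n)"
proof -
  have "sqrt n * sqrt n = n" using assms by simp
  then show ?thesis using assms
    by (simp add: ketbra_def vec_of_list_index of_real_mult[symmetric] del: of_real_mult)
qed

lemma ketbra_list:
  assumes "a < length l" "b < length l"
  shows "ketbra (vec_of_list l) $$ (a,b) = l!a * cnj (l!b)"
  using assms by (simp add: ketbra_def vec_of_list_index)

definition NR :: "real mat" where "NR = m8 [[405356, 151900, 239568, 0, 23002, -115010, 0, 0], [151900, 193998, 39928, 0, 46004, -230020, 0, 0], [239568, 39928, 293484, 92008, -131652, 0, -123278, -115010], [0, 0, 92008, 271784, 0, -131652, 46004, -376300], [23002, 46004, -131652, 0, 568331, 2387, 458988, 0], [-115010, -230020, 0, -131652, 2387, 494985, 39928, 219420], [0, 0, -123278, 46004, 458988, 39928, 415013, -57505], [0, 0, -115010, -376300, 0, 219420, -57505, 531325]]"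

definition AR :: "real mat" where "AR = (1/3174276) \<cdot>\<^sub>m NR"

definition MM :: "real \<Rightarrow> real \<Rightarrow> real mat" where
  "MM p q = mat 8 8 (\<lambda>(i,j). (if i = j then p * 3174276 else 0) - q * NR $$ (i,j))"

lemma Hmat_entry: assumes "i < 8" "j < 8" shows "Hmat $$ (i,j) = complex_of_real (AR $$ (i,j))"
proof -
  have e: "ketbra psiAB $$ (a,b) = complex_of_real ([0, 6, -9, -10]!a * [0, 6, -9, -10]!b / 217)"
     "ketbra psiAC $$ (a,b) = complex_of_real ([-2, -4, -1, 5]!a * [-2, -4, -1, 5]!b / 46)"
     "ketbra psiBC $$ (a,b) = complex_of_real ([-6, -1, -4, 0]!a * [-6, -1, -4, 0]!b / 53)"
     if "a < 4" "b < 4" for a b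
    unfolding psiAB_def psiAC_def psiBC_def by (rule ketbra_entry; use that in simp)+
  have q: "qbit i k < 2" for i k unfolding qbit_def by simp
  have H: "Hmat $$ (i,j) = complex_of_real ((1/6) * (
      (if qbit i 2 = qbit j 2 then [0, 6, -9, -10]!(2 * qbit i 0 + qbit i 1) * [0, 6, -9, -10]!(2 * qbit j 0 + qbit j 1) / 217 else 0)
    + (if qbit i 1 = qbit j 1 then [-2, -4, -1, 5]!(2 * qbit i 0 + qbit i 2) * [-2, -4, -1, 5]!(2 * qbit j 0 + qbit j 2) / 46 else 0)
    + (if qbit i 0 = qbit j 0 then [-6, -1, -4, 0]!(2 * qbit i 1 + qbit i 2) * [-6, -1, -4, 0]!(2 * qbit j 1 + qbit j 2) / 53 else 0)))"
  proof -
    have b: "2 * qbit i p + qbit i r < 4" for i p r using q[of i p] q[of i r] by linarith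
    show ?thesis using assms by (simp add: Hmat_def embed2_def e b)
  qed
  show ?thesis unfolding H AR_def NR_def using assms unfolding less8
    by (elim disjE; simp add: qbit_def m8_def)
qed


definition U0 :: "real mat" where "U0 = m8 [[1, 350000, -474808000, -412133344000000, 5788241235662839000, 1946456259921024655000, 9199254349417766494000000, -88647015085704630490000000], [0, 503201, -196468000, -170534224000000, 2776528984957678000, 10993847364664329310000, -30422501113488581344000000, -53668298220836233640000000], [0, 0, -308260979, -267570529772000, 3120839843508986000, -15752603404875115000000, 63140344666579516782811000, -29180609916130740386695000], [0, 0, 0, 186667225749169, 815834826632000000, 604713715694417606000, 547469938797260993902000, 42223273838399081972150000], [0, 0, 0, 0, 4116227163672239163, 46815724103039425501500, -152435343731319099767206000, -22801174286817750740000000], [0, 0, 0, 0, 0, -12625720229607464895627, 43386594945621162220764000, 32102654150730054756690000], [0, 0, 0, 0, 0, 0, 2069458328303137200438267, -1468032426093951968347500], [0, 0, 0, 0, 0, 0, 0, -58038052375307345129055837]]"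
definition L0 :: "real mat" where "L0 = m8 [[436778468, 0, 0, 0, 0, 0, 0, 0], [-303800000, 326168475792068, 0, 0, 0, 0, 0, 0], [-479136000, -207881219056000, 39573451858823828, 0, 0, 0, 0, 0], [0, 0, 56724952311664000, 180636512850592543429092, 0, 0, 0, 0], [-46004000, -62399917608000, -41246653838616000, -35802095531918688000000, 756179635991650287528892284, 0, 0, 0], [230020000, 311999588040000, -199598474880000000, -124101248987180805624000, 2803887347979237272135838000, 2189677301510923046686126806564, 0, 0], [0, 0, -76003593938324000, -83145997645194773352000, -3084199289071742921678088000, -45907009019202186776492622288000, 152848491696681417862087149271996956, 0], [0, 0, -70906190389580000, 78939180840669149400000, 1331852871327180159720000000, 2372364772803184632772552680000, -3866196967452807945144837252330000, 80564078178992225694819215788284]]"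
lemma cert0: "MM 393 2000 * U0 = L0"
proof (rule mat8_eqI)
  show "MM 393 2000 * U0 \<in> carrier_mat 8 8"
    by (rule mult_carrier_mat[of _ 8 8 _ 8]) (simp_all add: MM_def U0_def)
  show "L0 \<in> carrier_mat 8 8" by (simp add: L0_def)
  show "\<forall>i<8. \<forall>j<8. (MM 393 2000 * U0) $$ (i,j) = L0 $$ (i,j)"
    unfolding all8 by (simp add: sum8 scalar_prod_def MM_def U0_def L0_def NR_def m8_def)
qed
lemma sign0: "det (MM 393 2000) < 0"
proof -
  have "det (MM 393 2000) * prod_list (diag_mat U0) = prod_list (diag_mat L0)"
  proof (rule det_cert[OF _ _ _ _ _ cert0])
    show "MM 393 2000 \<in> carrier_mat 8 8" by (simp add: MM_def)
    show "U0 \<in> carrier_mat 8 8" "L0 \<in> carrier_mat 8 8" by (simp_all add: U0_def L0_def)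
    show "upper_triangular U0" unfolding U0_def by (rule ut8I) (unfold all8, simp add: m8_def)
    show "\<And>i j. i < j \<Longrightarrow> j < 8 \<Longrightarrow> L0 $$ (i, j) = 0" unfolding L0_def
      by (rule lt8I) (unfold all8, simp add: m8_def)
  qed
  then have "det (MM 393 2000) * (-180739523751669185997606584145106843790330069016425210153146008615895174908824422321300500873478460402905185565555252629) = (20764447179821317928566389679714944811001536604527092519757126910642355432192782134840314598815269781302848035698890403543826114124881469897134978266972931130963468677817855892277822160896)"
    by (simp add: U0_def L0_def diag8)
  then show ?thesis by linarith
qed

definition U1 :: "real mat" where "U1 = m8 [[1, 35000, 8672800, 752799040000, -1101408713386900, -17304050638806234500, 191190519638524220000, 130330668810489100000], [0, 136991, 2618800, 227311840000, 1512654787306200, -17685113301621669000, 31027690948345280000, 220454007485207600000], [0, 0, 19862999, 1724108313200, -7184660892300600, -8149366297180650000, 505345136488904521300, -159073862821123254500], [0, 0, 0, 11178481815101, -907889755920000, -9909475207832933400, 22786309523394646600, 497338769463377965000], [0, 0, 0, 0, 36371185404470057, -49837428513640850, -1309752775976570059800, 1164975818632811600000], [0, 0, 0, 0, 0, 49109851982205746373, -156681112116878428800, -480933727471982961000], [0, 0, 0, 0, 0, 0, -1098429925042464376749, 1023621202864910622750], [0, 0, 0, 0, 0, 0, 0, -707808409977861843627]]"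
definition L1 :: "real mat" where "L1 = m8 [[118908188, 0, 0, 0, 0, 0, 0, 0], [-30380000, 21016880337908, 0, 0, 0, 0, 0, 0], [-47913600, -2770931329600, 2369838144801412, 0, 0, 0, 0, 0], [0, 0, -365510962398400, 1596113100289763981388, 0, 0, 0, 0], [-4600400, -1421440792800, 459007304709600, 39841834048793280000, 2941287254918266561771716, 0, 0, 0], [23002000, 7107203964000, 319967020800000, 322107034989775370400, 2984863268538977788200, 3486719748744093651969308724, 0, 0], [0, 0, 489734158144400, -60342050557447360800, -3507576342315318441823200, -497349093845916391457548800, 5242484912912070556928857788, 0], [0, 0, 456888702998000, 880950480824727660000, -233589352875237601200000, -3088375572096372852816732000, 7581597840472173074527551000, 316829985403769654606744724]]"
lemma cert1: "MM 63 200 * U1 = L1"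
proof (rule mat8_eqI)
  show "MM 63 200 * U1 \<in> carrier_mat 8 8"
    by (rule mult_carrier_mat[of _ 8 8 _ 8]) (simp_all add: MM_def U1_def)
  show "L1 \<in> carrier_mat 8 8" by (simp add: L1_def)
  show "\<forall>i<8. \<forall>j<8. (MM 63 200 * U1) $$ (i,j) = L1 $$ (i,j)"
    unfolding all8 by (simp add: sum8 scalar_prod_def MM_def U1_def L1_def NR_def m8_def)
qed
lemma sign1: "det (MM 63 200) > 0"
proof -
  have "det (MM 63 200) * prod_list (diag_mat U1) = prod_list (diag_mat L1)"
  proof (rule det_cert[OF _ _ _ _ _ cert1])
    show "MM 63 200 \<in> carrier_mat 8 8" by (simp add: MM_def)
    show "U1 \<in> carrier_mat 8 8" "L1 \<in> carrier_mat 8 8" by (simp_all add: U1_def L1_def)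
    show "upper_triangular U1" unfolding U1_def by (rule ut8I) (unfold all8, simp add: m8_def)
    show "\<And>i j. i < j \<Longrightarrow> j < 8 \<Longrightarrow> L1 $$ (i, j) = 0" unfolding L1_def
      by (rule lt8I) (unfold all8, simp add: m8_def)
  qed
  then have "det (MM 63 200) * (42240965549485407016823475431217775344627725431409519155894686543344714839079036857158072188874493742127) = (161020180691012837198274254857110958366327955020143707798269428137838249504940938291604149370788883793048402918656589200543810603489370548479973128944730320092987392)"
    by (simp add: U1_def L1_def diag8)
  then show ?thesis by linarith
qed

definition U2 :: "real mat" where "U2 = m8 [[1, 87500, 55654000, 389578000000, -129029061379752750, -5798532317748918108750, -483517913914755627375000, 152882114332043424375000], [0, 355277, 16609000, 116263000000, 204284201266494500, -6064844950282041217500, -66673448251733844500000, 101516993471403652500000], [0, 0, 132748541, 929239787000, -933482108496228500, -2660471351427852187500, -1353361726593253454629750, 220618032288401872203750], [0, 0, 0, 6294040555283, -114466292286500000, -3402841295458632603000, -41434789728301351539500, 219685683622255943987500], [0, 0, 0, 0, 4913555133724290301, -44675809872199310125, 3581767985334616830681000, -274595846259323356875000], [0, 0, 0, 0, 0, 17534705390571374032558, 402164146651782941898500, -281145185085798463432500], [0, 0, 0, 0, 0, 0, 3181808868747068492702389, -224577982344324077960625], [0, 0, 0, 0, 0, 0, 0, -313199377113027190242292]]"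
definition L2 :: "real mat" where "L2 = m8 [[308380436, 0, 0, 0, 0, 0, 0, 0], [-75950000, 140460169243772, 0, 0, 0, 0, 0, 0], [-119784000, -17573850028000, 41364434529319876, 0, 0, 0, 0, 0], [0, 0, -6106963880164000, 2318564016003836081388, 0, 0, 0, 0], [-11501000, -9178419054000, 7716188587866000, 54013320115062000000, 1050188575252100733557963736, 0, 0, 0], [57505000, 45892095270000, 5110584360000000, 450085604112058758000, 2675723604865761082006500, 3366646509550323195580456181788, 0, 0], [0, 0, 8182487318699000, -87498109621726566000, -1182537371889347233849194000, -425526666259078316559267662000, 53354394607852623690233403525104, 0], [0, 0, 7633704850205000, 1237659664427931450000, -75216721542780594892500000, -2716967523203985809408575680000, -38257490805641958919899694027500, 1549906837411491750984161312188]]"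
lemma cert2: "MM 161 500 * U2 = L2"
proof (rule mat8_eqI)
  show "MM 161 500 * U2 \<in> carrier_mat 8 8"
    by (rule mult_carrier_mat[of _ 8 8 _ 8]) (simp_all add: MM_def U2_def)
  show "L2 \<in> carrier_mat 8 8" by (simp add: L2_def)
  show "\<forall>i<8. \<forall>j<8. (MM 161 500 * U2) $$ (i,j) = L2 $$ (i,j)"
    unfolding all8 by (simp add: sum8 scalar_prod_def MM_def U2_def L2_def NR_def m8_def)
qed
lemma sign2: "det (MM 161 500) < 0"
proof -
  have "det (MM 161 500) * prod_list (diag_mat U2) = prod_list (diag_mat L2)"
  proof (rule det_cert[OF _ _ _ _ _ cert2])
    show "MM 161 500 \<in> carrier_mat 8 8" by (simp add: MM_def)
    show "U2 \<in> carrier_mat 8 8" "L2 \<in> carrier_mat 8 8" by (simp_all add: U2_def L2_def)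
    show "upper_triangular U2" unfolding U2_def by (rule ut8I) (unfold all8, simp add: m8_def)
    show "\<And>i j. i < j \<Longrightarrow> j < 8 \<Longrightarrow> L2 $$ (i, j) = 0" unfolding L2_def
      by (rule lt8I) (unfold all8, simp add: m8_def)
  qed
  then have "det (MM 161 500) * (-25486821137868933237375456297798921244430334181342388467134014486909710296373048633981040596405742279293648789684424) = (1214581851188421576801410159197704524387181372697731805687890658273077838911552301439509487531736391587234690083382054886308910107143137242890284120238658425514651987843737681657856)"
    by (simp add: U2_def L2_def diag8)
  then show ?thesis by linarith
qed

definition U3 :: "real mat" where "U3 = m8 [[1, 50, 740, 91760, 21834471, -63522096672, -22749200660, -189225631820], [0, 389, 182, 22568, 225578318, -89516638796, 2512827858, -175988566060], [0, 0, 3535, 438340, -746500622, -17948631046, -139999529595, -403790977010], [0, 0, 0, 5914447, -52217144, -50969924722, 20228206514, -1092281958360], [0, 0, 0, 0, 7407003709, -1993167563, 450260734400, -24302335180], [0, 0, 0, 0, 0, 496704012985, 35508082016, 865980204720], [0, 0, 0, 0, 0, 0, 959982590287, -147144647955], [0, 0, 0, 0, 0, 0, 0, 3398374101907]]"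
definition L3 :: "real mat" where "L3 = m8 [[2363564, 0, 0, 0, 0, 0, 0, 0], [-303800, 1068672920, 0, 0, 0, 0, 0, 0], [-479136, -55020784, 8777039348, 0, 0, 0, 0, 0], [0, 0, -650496560, 15478521465036, 0, 0, 0, 0], [-46004, -38091312, 879991224, 109118911776, 14874298372848810, 0, 0, 0], [230020, 190456560, 253942080, 1588786370808, 59687395841598, 1015749898921952404, 0, 0], [0, 0, 871575460, -436101082536, -6978701449145664, -37570817516473472, 1797896225117490722, 0], [0, 0, 813120700, 4552039779000, -211008695646840, -260462098517315520, 77846287422000930, 5864213849919265232]]"
lemma cert3: "MM 1 2 * U3 = L3"
proof (rule mat8_eqI)
  show "MM 1 2 * U3 \<in> carrier_mat 8 8"
    by (rule mult_carrier_mat[of _ 8 8 _ 8]) (simp_all add: MM_def U3_def)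
  show "L3 \<in> carrier_mat 8 8" by (simp add: L3_def)
  show "\<forall>i<8. \<forall>j<8. (MM 1 2 * U3) $$ (i,j) = L3 $$ (i,j)"
    unfolding all8 by (simp add: sum8 scalar_prod_def MM_def U3_def L3_def NR_def m8_def)
qed
lemma sign3: "det (MM 1 2) > 0"
proof -
  have "det (MM 1 2) * prod_list (diag_mat U3) = prod_list (diag_mat L3)"
  proof (rule det_cert[OF _ _ _ _ _ cert3])
    show "MM 1 2 \<in> carrier_mat 8 8" by (simp add: MM_def)
    show "U3 \<in> carrier_mat 8 8" "L3 \<in> carrier_mat 8 8" by (simp_all add: U3_def L3_def)
    show "upper_triangular U3" unfolding U3_def by (rule ut8I) (unfold all8, simp add: m8_def)
    show "\<And>i j. i < j \<Longrightarrow> j < 8 \<Longrightarrow> L3 $$ (i, j) = 0" unfolding L3_def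
      by (rule lt8I) (unfold all8, simp add: m8_def)
  qed
  then have "det (MM 1 2) * (97617557553595096592830736713045288809213749446799047057925) = (54662235246960117192482153999552185591864015440203724166942026749188122762928053821837441885032373200758374400)"
    by (simp add: U3_def L3_def diag8)
  then show ?thesis by linarith
qed

lemma NR_carrier[simp]: "NR \<in> carrier_mat 8 8" "dim_row NR = 8" "dim_col NR = 8"
  by (simp_all add: NR_def)

lemma AR_carrier: "AR \<in> carrier_mat 8 8" by (simp add: AR_def)

lemma dim_Hmat: "dim_row Hmat = 8" "dim_col Hmat = 8"
  by (simp_all add: Hmat_def embed2_def)

lemma Hmat_map: "Hmat = map_mat complex_of_real AR"
  by (rule eq_matI) (auto simp: Hmat_entry dim_Hmat AR_def)

lemma NR_sym: assumes "i < 8" "j < 8" shows "NR $$ (i,j) = NR $$ (j,i)"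
proof -
  have "\<forall>i<8. \<forall>j<8. NR $$ (i,j) = NR $$ (j,i)"
    unfolding all8 by (simp add: NR_def m8_def)
  then show ?thesis using assms by blast
qed

lemma herm_H: "hermitian Hmat"
  unfolding hermitian_def Hmat_map using NR_sym
  by (auto simp: AR_def)

lemma negchar: assumes "q \<noteq> 0"
  shows "- char_matrix AR (p/q) = (1/(q*3174276)) \<cdot>\<^sub>m MM p q"
  by (rule eq_matI) (use assms in \<open>auto simp: char_matrix_def AR_def MM_def field_simps\<close>)

lemma poly_g: assumes "q > 0"
  shows "poly (char_poly AR) (p/q) = (1/(q*3174276))^8 * det (MM p q)"
proof -
  have "poly (char_poly AR) (p/q) = det (- char_matrix AR (p/q))"
    by (rule char_poly_matrix[OF AR_carrier])
  also have "\<dots> = (1/(q*3174276))^8 * det (MM p q)"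
  proof -
    have d: "dim_col (MM p q) = 8" by (simp add: MM_def)
    have n: "- char_matrix AR (p/q) = (1/(q*3174276)) \<cdot>\<^sub>m MM p q"
      using assms by (intro negchar) simp
    show ?thesis unfolding n by (simp only: det_smult d)
  qed
  finally show ?thesis .
qed

lemma g_signs:
  "poly (char_poly AR) (393/2000) < 0" "poly (char_poly AR) (63/200) > 0"
  "poly (char_poly AR) (161/500) < 0" "poly (char_poly AR) (1/2) > 0"
proof -
  have "poly (char_poly AR) (393/2000) = (1/(2000*3174276))^8 * det (MM 393 2000)"
    using poly_g[of 2000 393] by simp
  then show "poly (char_poly AR) (393/2000) < 0" using sign0
    by (simp add: mult_pos_neg)
  have "poly (char_poly AR) (63/200) = (1/(200*3174276))^8 * det (MM 63 200)"
    using poly_g[of 200 63] by simp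
  then show "poly (char_poly AR) (63/200) > 0" using sign1
    by simp
  have "poly (char_poly AR) (161/500) = (1/(500*3174276))^8 * det (MM 161 500)"
    using poly_g[of 500 161] by simp
  then show "poly (char_poly AR) (161/500) < 0" using sign2
    by (simp add: mult_pos_neg)
  have "poly (char_poly AR) (1/2) = (1/(2*3174276))^8 * det (MM 1 2)"
    using poly_g[of 2 1] by simp
  then show "poly (char_poly AR) (1/2) > 0" using sign3
    by simp
qed

lemma charH: "char_poly Hmat = map_poly complex_of_real (char_poly AR)"
  unfolding Hmat_map by (rule of_real_hom.char_poly_hom[OF AR_carrier])

lemma root_in:
  assumes r: "poly (char_poly AR) r = 0"
  shows "r \<in># image_mset Re (proots (char_poly Hmat))"
proof -
  have g0: "char_poly AR \<noteq> 0" using g_signs(4) by auto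
  then have h0: "char_poly Hmat \<noteq> 0" unfolding charH by simp
  have "poly (char_poly Hmat) (complex_of_real r) = 0"
    unfolding charH of_real_hom.poly_map_poly r by simp
  then have "complex_of_real r \<in># proots (char_poly Hmat)" using h0 by simp
  then have "r \<in> Re ` set_mset (proots (char_poly Hmat))"
    by (intro image_eqI[of _ _ "complex_of_real r"]) simp_all
  then show ?thesis by simp
qed

lemma top3:
  fixes L :: "real list"
  assumes s: "sorted_wrt (\<ge>) L" and a: "a \<in> set L" and b: "b \<in> set L" and c: "c \<in> set L"
    and cb: "c < b" and ba: "b < a"
  shows "a + b + c \<le> sum_list (take 3 L)"
proof -
  have mono: "L!j \<le> L!i" if "i \<le> j" "j < length L" for i j
    using s that by (cases "i = j") (auto simp: sorted_wrt_iff_nth_less)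
  obtain ia where ia: "ia < length L" "L!ia = a" using a by (auto simp: in_set_conv_nth)
  obtain ib where ib: "ib < length L" "L!ib = b" using b by (auto simp: in_set_conv_nth)
  obtain ic where ic: "ic < length L" "L!ic = c" using c by (auto simp: in_set_conv_nth)
  have "ia < ib" using mono[of ib ia] ia ib ba by (cases "ib \<le> ia") auto
  moreover have "ib < ic" using mono[of ic ib] ib ic cb by (cases "ic \<le> ib") auto
  ultimately have i2: "2 \<le> ic" "1 \<le> ib" by auto
  have "3 \<le> length L" using i2 ic by auto
  then obtain x y z t where L: "L = x # y # z # t"
    by (cases L; cases "tl L"; cases "tl (tl L)"; auto)
  have "a \<le> L!0" using mono[of 0 ia] ia by auto
  moreover have "b \<le> L!1" using mono[of 1 ib] ib i2 by auto
  moreover have "c \<le> L!2" using mono[of 2 ic] ic i2 by auto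
  ultimately show ?thesis unfolding L by simp
qed

lemma top_H: "top_eig_sum 3 Hmat > 5/6"
proof -
  obtain r1 where r1: "393/2000 < r1" "r1 < 63/200" "poly (char_poly AR) r1 = 0"
    using poly_IVT_pos[of "393/2000" "63/200" "char_poly AR"] g_signs by auto
  obtain r2 where r2: "63/200 < r2" "r2 < 161/500" "poly (char_poly AR) r2 = 0"
    using poly_IVT_neg[of "63/200" "161/500" "char_poly AR"] g_signs by auto
  obtain r3 where r3: "161/500 < r3" "r3 < 1/2" "poly (char_poly AR) r3 = 0"
    using poly_IVT_pos[of "161/500" "1/2" "char_poly AR"] g_signs by auto
  let ?R = "image_mset Re (proots (char_poly Hmat))"
  let ?L = "rev (sorted_list_of_multiset ?R)"
  have s: "sorted_wrt (\<ge>) ?L" by (simp add: sorted_wrt_rev)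
  have "r3 + r2 + r1 \<le> sum_list (take 3 ?L)"
    by (rule top3[OF s]) (use r1 r2 r3 root_in in auto)
  then show ?thesis using r1 r2 r3 unfolding top_eig_sum_def eigs_desc_def by linarith
qed

definition DT :: "complex mat" where "DT = m8 [[1/2,0,0,0,0,0,0,0],[0,1/6,0,0,0,0,0,0],[0,0,1/6,0,0,0,0,0],
    [0,0,0,0,0,0,0,0],[0,0,0,0,1/6,0,0,0],[0,0,0,0,0,0,0,0],[0,0,0,0,0,0,0,0],[0,0,0,0,0,0,0,0]]"

lemma DT_carrier: "DT \<in> carrier_mat 8 8" "dim_row DT = 8" "dim_col DT = 8"
  by (simp_all add: DT_def)

lemma less4: "i < (4::nat) \<longleftrightarrow> i = 0 \<or> i = 1 \<or> i = 2 \<or> i = 3"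
  by auto

lemma proots_lin_prod: "proots (\<Prod>a\<leftarrow>xs. [:- a, 1:]) = mset (xs :: 'a::idom list)"
proof (induction xs)
  case Nil then show ?case by simp
next
  case (Cons a xs)
  have nz: "(\<Prod>b\<leftarrow>xs. [:- b, 1:]) \<noteq> (0::'a poly)" by (auto simp: prod_list_zero_iff)
  have "proots (\<Prod>b\<leftarrow>a#xs. [:- b, 1:]) = proots ([:- a, 1:] * (\<Prod>b\<leftarrow>xs. [:- b, 1:]))"
    by (simp only: list.map prod_list.Cons)
  also have "\<dots> = proots [:- a, 1:] + proots (\<Prod>b\<leftarrow>xs. [:- b, 1:])"
    by (rule proots_mult) (use nz in auto)
  also have "\<dots> = {#a#} + mset xs" using Cons.IH proots_linear_factor[of "-a"] by simp
  finally show ?case by simp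
qed

lemma Htarget_entry: assumes "i < 8" "j < 8"
  shows "Htarget $$ (i,j) = DT $$ (i,j)"
proof -
  have e: "ketbra ket00 $$ (a,b) = [1,0,0,0]!a * [1,0,0,0]!b" if "a < 4" "b < 4" for a b
  proof -
    have "cnj ([1,0,0,0]!b) = ([1,0,0,0]!b :: complex)" using that
      unfolding less4 by auto
    then show ?thesis unfolding ket00_def using that by (subst ketbra_list) auto
  qed
  have q: "qbit i k < 2" for i k unfolding qbit_def by simp
  have b: "2 * qbit i p + qbit i r < 4" for i p r using q[of i p] q[of i r] by linarith
  have H: "Htarget $$ (i,j) = (1/6) * (
      (if qbit i 2 = qbit j 2 then [1,0,0,0]!(2 * qbit i 0 + qbit i 1) * [1,0,0,0]!(2 * qbit j 0 + qbit j 1) else 0)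
    + (if qbit i 1 = qbit j 1 then [1,0,0,0]!(2 * qbit i 0 + qbit i 2) * [1,0,0,0]!(2 * qbit j 0 + qbit j 2) else 0)
    + (if qbit i 0 = qbit j 0 then [1,0,0,0]!(2 * qbit i 1 + qbit i 2) * [1,0,0,0]!(2 * qbit j 1 + qbit j 2) else 0))"
    using assms by (simp add: Htarget_def embed2_def e b)
  show ?thesis unfolding H DT_def using assms unfolding less8
    by (elim disjE; simp add: qbit_def m8_def)
qed

lemma dim_Ht: "dim_row Htarget = 8" "dim_col Htarget = 8"
  by (simp_all add: Htarget_def embed2_def)

lemma Ht_DT: "Htarget = DT"
  by (rule eq_matI) (simp_all only: Htarget_entry dim_Ht DT_carrier)

lemma herm_Ht: "hermitian Htarget"
proof -
  have "\<forall>i<8. \<forall>j<8. DT $$ (i,j) = cnj (DT $$ (j,i))"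
    unfolding all8 by (simp add: DT_def m8_def)
  then show ?thesis unfolding hermitian_def Ht_DT DT_carrier(2) using DT_carrier(1) by blast
qed

lemma top_Ht: "top_eig_sum 3 Htarget = 5/6"
proof -
  have ut: "upper_triangular DT" unfolding DT_def by (rule ut8I) (unfold all8, simp add: m8_def)
  have cp: "char_poly DT = (\<Prod>a\<leftarrow>[1/2,1/6,1/6,0,1/6,0,0,0]. [:- a, 1:])"
    using char_poly_upper_triangular[of DT 8, OF DT_carrier(1) ut] by (simp add: DT_def diag8)
  have pr: "proots (char_poly DT) = mset [1/2,1/6,1/6,0,1/6,0,0,0]"
    unfolding cp by (rule proots_lin_prod)
  have im: "image_mset Re (mset [1/2,1/6,1/6,0,1/6,0,0,0::complex]) = mset [1/2,1/6,1/6,0,1/6,0,0,0::real]"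
    by simp
  have so: "sorted_list_of_multiset (mset [1/2,1/6,1/6,0,1/6,0,0,0::real]) = [0,0,0,0,1/6,1/6,1/6,1/2]"
    by simp
  show ?thesis unfolding top_eig_sum_def eigs_desc_def Ht_DT pr im so
    by simp
qed

theorem mainTheorem1:
  shows "hermitian Hmat \<and> hermitian Htarget \<and>
         top_eig_sum 3 Hmat > 5/6 \<and> top_eig_sum 3 Htarget = 5/6 \<and>
         \<not> majorized Hmat Htarget"
proof -
  have "\<not> majorized Hmat Htarget"
  proof
    assume "majorized Hmat Htarget"
    then have "top_eig_sum 3 Hmat \<le> top_eig_sum 3 Htarget"
      unfolding majorized_def dim_Hmat by auto
    then show False using top_H top_Ht by linarith
  qed
  then show ?thesis using herm_H herm_Ht top_H top_Ht by blast
qed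

end
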